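(* Let $\mathcal H$ be a hypergraph and $\mathcal A$ a sub-hypergraph of $\mathcal H$. Suppose that for any $\sigma,\sigma'\in\mathcal H$, either $\sigma\cap\sigma'=\emptyset$ or $\sigma\cap\sigma'\in\mathcal H$; and that for any $\tau\in\mathcal A$ and $\tau'\in\mathcal H\setminus\mathcal A$, $\tau\cap\tau'=\emptyset$. Then for each $n\ge0$, $$H_n(\mathcal H,\mathcal A)\oplus H_n(\mathcal H,\mathcal H\setminus\mathcal A)\cong H_n(\mathcal H).$$
   Context: A hypergraph is a finite set of nonempty finite subsets of a vertex set (hyperedges); an $n$-hyperedge has $n+1$ vertices. $\mathcal H\setminus\mathcal A=\{\sigma\in\mathcal H:\sigma\notin\mathcal A\}$. The associated simplicial complex is $\Delta\mathcal H=\{\sigma\ne\emptyset:\sigma\subseteq\tau\text{ for some }\tau\in\mathcal H\}$. Fix an abelian coefficient group $G$; chains are simplicial chains of $\Delta\mathcal H$ with coefficients in $G$ and boundary $\partial$; $G(\mathcal X)_n$ is the group of $G$-linear combinations of $n$-hyperedges of $\mathcal X$; $\mathrm{Inf}_n(\mathcal X)=G(\mathcal X)_n\cap\partial_n^{-1}(G(\mathcal X)_{n-1})$. Embedded homology $H_n(\mathcal H)=H_n(\mathrm{Inf}_*(\mathcal H))$; relative embedded homology $H_n(\mathcal H,\mathcal A)=H_n(\mathrm{Inf}_*(\mathcal H)/\mathrm{Inf}_*(\mathcal A))$. *)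

theory Defs
  imports Main "HOL-Algebra.Coset"
begin

definition hypergraph :: "'v set set \<Rightarrow> bool" where
  "hypergraph H \<longleftrightarrow> finite H \<and> (\<forall>\<sigma>\<in>H. \<sigma> \<noteq> {} \<and> finite \<sigma>)"

definition assoc_complex :: "'v set set \<Rightarrow> 'v set set" where
  "assoc_complex H = {\<sigma>. \<sigma> \<noteq> {} \<and> (\<exists>\<tau>\<in>H. \<sigma> \<subseteq> \<tau>)}"

text \<open>Simplices are oriented by the linear order on vertices. An n-chain of the
 associated complex is a G-valued function on its n-simplices (finite support is
 automatic since the complex is finite).\<close>

definition chains :: "'v set set \<Rightarrow> nat \<Rightarrow> ('v set \<Rightarrow> 'g::ab_group_add) set" where
  "chains H n = {c. \<forall>\<sigma>. c \<sigma> \<noteq> 0 \<longrightarrow> \<sigma> \<in> assoc_complex H \<and> card \<sigma> = Suc n}"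

definition sgn_scale :: "nat \<Rightarrow> 'g::ab_group_add \<Rightarrow> 'g" where
  "sgn_scale k x = (if even k then x else - x)"

text \<open>Simplicial boundary of an n-chain: removing the i-th vertex (0-based, in
 increasing order) carries the sign (-1)^i. The boundary of a 0-chain is 0.\<close>
definition bd :: "'v::linorder set set \<Rightarrow> nat \<Rightarrow> ('v set \<Rightarrow> 'g::ab_group_add) \<Rightarrow> ('v set \<Rightarrow> 'g)" where
  "bd H n c = (\<lambda>\<tau>. if 0 < n \<and> \<tau> \<in> assoc_complex H \<and> card \<tau> = n
      then (\<Sum>v\<in>\<Union>H - \<tau>. sgn_scale (card {w\<in>\<tau>. w < v}) (c (insert v \<tau>)))
      else 0)"

text \<open>G(X)_n: G-linear combinations of n-hyperedges of X.\<close>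
definition hchains :: "'v set set \<Rightarrow> 'v set set \<Rightarrow> nat \<Rightarrow> ('v set \<Rightarrow> 'g::ab_group_add) set" where
  "hchains H X n = {c \<in> chains H n. \<forall>\<sigma>. c \<sigma> \<noteq> 0 \<longrightarrow> \<sigma> \<in> X}"

text \<open>Inf_n(X) = G(X)_n \<inter> \<partial>_n^{-1}(G(X)_{n-1}); for n = 0 the boundary is 0.\<close>
definition Inf_chains :: "'v::linorder set set \<Rightarrow> 'v set set \<Rightarrow> nat \<Rightarrow> ('v set \<Rightarrow> 'g::ab_group_add) set" where
  "Inf_chains H X n = {c \<in> hchains H X n. bd H n c \<in> hchains H X (n - 1)}"

definition add_grp :: "('a \<Rightarrow> 'g::ab_group_add) set \<Rightarrow> ('a \<Rightarrow> 'g) monoid" where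
  "add_grp S = \<lparr>carrier = S, mult = (\<lambda>f g x. f x + g x), one = (\<lambda>x. 0)\<rparr>"

text \<open>Homology of a chain complex (C_n, d_n : C_n \<rightarrow> C_{n-1}), with C_{-1} = 0:
 the cycle subgroup (kernel of d_n) modulo the image of d_{n+1}.\<close>
definition homology :: "(nat \<Rightarrow> ('a, 'm) monoid_scheme) \<Rightarrow> (nat \<Rightarrow> 'a \<Rightarrow> 'a) \<Rightarrow> nat \<Rightarrow> 'a set monoid" where
  "homology C d n =
     ((C n)\<lparr>carrier := {x \<in> carrier (C n). n = 0 \<or> d n x = \<one>\<^bsub>C (n - 1)\<^esub>}\<rparr>)
       Mod (d (Suc n) ` carrier (C (Suc n)))"

definition embedded_homology :: "'v::linorder set set \<Rightarrow> nat \<Rightarrow> ('v set \<Rightarrow> 'g::ab_group_add) set monoid" where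
  "embedded_homology H n = homology (\<lambda>k. add_grp (Inf_chains H H k)) (bd H) n"

definition quot_chain_grp :: "'v::linorder set set \<Rightarrow> 'v set set \<Rightarrow> nat \<Rightarrow> ('v set \<Rightarrow> 'g::ab_group_add) set monoid" where
  "quot_chain_grp H A n = add_grp (Inf_chains H H n) Mod (Inf_chains H A n)"

definition quot_bd :: "'v::linorder set set \<Rightarrow> 'v set set \<Rightarrow> nat \<Rightarrow> ('v set \<Rightarrow> 'g::ab_group_add) set \<Rightarrow> ('v set \<Rightarrow> 'g) set" where
  "quot_bd H A n q = (Inf_chains H A (n - 1)) #>\<^bsub>add_grp (Inf_chains H H (n - 1))\<^esub> (bd H n (SOME c. c \<in> q))"

definition rel_embedded_homology :: "'v::linorder set set \<Rightarrow> 'v set set \<Rightarrow> nat \<Rightarrow> ('v set \<Rightarrow> 'g::ab_group_add) set set monoid" where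
  "rel_embedded_homology H A n = homology (quot_chain_grp H A) (quot_bd H A) n"

end

theory Submission
  imports Defs
begin

definition addclosed :: "('a \<Rightarrow> 'g::ab_group_add) set \<Rightarrow> bool" where
  "addclosed S \<longleftrightarrow> (\<lambda>x. 0) \<in> S \<and> (\<forall>f\<in>S. \<forall>g\<in>S. (\<lambda>x. f x + g x) \<in> S) \<and> (\<forall>f\<in>S. (\<lambda>x. - f x) \<in> S)"

lemma add_grp_carrier[simp]: "carrier (add_grp S) = S"
  and add_grp_mult[simp]: "mult (add_grp S) = (\<lambda>f g x. f x + g x)"
  and add_grp_one[simp]: "one (add_grp S) = (\<lambda>x. 0)"
  and add_grp_upd[simp]: "(add_grp S)\<lparr>carrier := T\<rparr> = add_grp T"
  by (simp_all add: add_grp_def)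

lemma add_grp_comm_group:
  assumes "addclosed S" shows "comm_group (add_grp S)"
  using assms unfolding addclosed_def
  apply (intro comm_groupI)
  apply (auto simp: add.assoc add.commute)
  apply (rule_tac x="\<lambda>y. - x y" in bexI)
   apply auto
  done

lemma add_grp_inv:
  assumes "addclosed S" "f \<in> S" shows "inv\<^bsub>add_grp S\<^esub> f = (\<lambda>x. - f x)"
proof -
  interpret comm_group "add_grp S" using add_grp_comm_group[OF assms(1)] .
  show ?thesis
    apply (rule inv_equality)
    using assms by (auto simp: add_grp_def addclosed_def)
qed

lemma add_grp_subgroup:
  assumes "addclosed S" "addclosed T" "T \<subseteq> S" shows "subgroup T (add_grp S)"
proof -
  interpret comm_group "add_grp S" using add_grp_comm_group[OF assms(1)] .
  show ?thesis
    apply (rule subgroupI)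
    using assms by (auto simp: addclosed_def add_grp_inv[OF assms(1)])
qed


lemma comm_group_restrict:
  assumes "comm_group G" "subgroup S G" shows "comm_group (G\<lparr>carrier := S\<rparr>)"
proof -
  interpret comm_group G by fact
  have "group (G\<lparr>carrier := S\<rparr>)" using subgroup.subgroup_is_group[OF assms(2)] is_group by blast
  then show ?thesis
    apply (rule group.group_comm_groupI)
    using assms(2) subgroup.mem_carrier by (force intro: m_comm)
qed

lemma sgn_scale_add: "sgn_scale k (x + y) = sgn_scale k x + sgn_scale k y"
  by (simp add: sgn_scale_def)
lemma sgn_scale_neg: "sgn_scale k (- x) = - sgn_scale k x"
  by (simp add: sgn_scale_def)
lemma sgn_scale_0[simp]: "sgn_scale k 0 = 0"
  by (simp add: sgn_scale_def)

lemma sgn_scale_sum: "sgn_scale k (sum f S) = (\<Sum>x\<in>S. sgn_scale k (f x))"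
  by (simp add: sgn_scale_def sum_negf)

lemma bd_add: "bd H n (\<lambda>x. f x + g x) = (\<lambda>x. bd H n f x + bd H n g x)"
  by (auto simp: bd_def sgn_scale_add sum.distrib)
lemma bd_neg: "bd H n (\<lambda>x. - f x) = (\<lambda>x. - bd H n f x)"
  by (auto simp: bd_def sgn_scale_neg sum_negf)
lemma bd_zero: "bd H n (\<lambda>x. 0) = (\<lambda>x. 0)"
  by (auto simp: bd_def)
lemma bd_0: "bd H 0 c = (\<lambda>x. 0)"
  by (auto simp: bd_def)

lemma bd_chains: "bd H n c \<in> chains H (n - 1)"
  by (auto simp: bd_def chains_def split: if_splits)

lemma hchains_addclosed: "addclosed (hchains H X n)"
  unfolding addclosed_def hchains_def chains_def
  by auto (metis add.right_neutral)+

lemma Inf_addclosed: "addclosed (Inf_chains H X n)"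
  using hchains_addclosed[of H X n] hchains_addclosed[of H X "n-1"]
  unfolding addclosed_def Inf_chains_def by (auto simp: bd_add bd_neg bd_zero)

lemma sgn_swap: "sgn_scale a (sgn_scale (Suc b) x) = - sgn_scale b (sgn_scale a (x::'g::ab_group_add))"
  by (auto simp: sgn_scale_def)

lemma bd_bd:
  assumes fin: "finite (\<Union>H)" and c: "c \<in> chains H (Suc m)"
  shows "bd H m (bd H (Suc m) c) = (\<lambda>_. 0)"
proof
  fix \<tau>
  show "bd H m (bd H (Suc m) c) \<tau> = 0"
  proof (cases "0 < m \<and> \<tau> \<in> assoc_complex H \<and> card \<tau> = m")
    case False then show ?thesis by (auto simp: bd_def)
  next
    case True
    note T0 = True
    then have ft: "finite \<tau>" using card_ge_0_finite by blast
    define U where "U = \<Union>H"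
    define a where "a x = card {w\<in>\<tau>. w < x}" for x
    define g where "g v w = sgn_scale (a v) (sgn_scale (card {x\<in>insert v \<tau>. x < w}) (c (insert w (insert v \<tau>))))" for v w
    have inner: "sgn_scale (a v) (bd H (Suc m) c (insert v \<tau>)) = (\<Sum>w\<in>U - insert v \<tau>. g v w)"
      if v: "v \<in> U - \<tau>" for v
    proof (cases "insert v \<tau> \<in> assoc_complex H")
      case True
      have "card (insert v \<tau>) = Suc m" using v ft T0 by simp
      define F where "F w = sgn_scale (card {x\<in>insert v \<tau>. x < w}) (c (insert w (insert v \<tau>)))" for w
      have "bd H (Suc m) c (insert v \<tau>) = sum F (U - insert v \<tau>)"
        using \<open>insert v \<tau> \<in> assoc_complex H\<close> \<open>card (insert v \<tau>) = Suc m\<close>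
        unfolding bd_def U_def F_def by simp
      then have "sgn_scale (a v) (bd H (Suc m) c (insert v \<tau>)) = (\<Sum>w\<in>U - insert v \<tau>. sgn_scale (a v) (F w))"
        by (simp only: sgn_scale_sum)
      then show ?thesis by (simp only: g_def F_def)
    next
      case False
      have "c (insert w (insert v \<tau>)) = 0" for w
      proof -
        have "insert w (insert v \<tau>) \<notin> assoc_complex H"
          using False unfolding assoc_complex_def by auto
        then show ?thesis using c unfolding chains_def by auto
      qed
      then show ?thesis using False by (simp add: bd_def g_def)
    qed
    define P where "P = {(v,w). v \<in> U - \<tau> \<and> w \<in> U - \<tau> \<and> v \<noteq> w}"
    define P1 where "P1 = {(v,w). v \<in> U - \<tau> \<and> w \<in> U - \<tau> \<and> v < w}"
    define P2 where "P2 = {(v,w). v \<in> U - \<tau> \<and> w \<in> U - \<tau> \<and> w < v}"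
    have finU: "finite U" using fin U_def by simp
    have "P1 \<subseteq> U \<times> U" "P2 \<subseteq> U \<times> U" unfolding P1_def P2_def by auto
    then have finP: "finite P1" "finite P2"
      using finite_subset finite_cartesian_product[OF finU finU] by blast+
    have "bd H m (bd H (Suc m) c) \<tau> = (\<Sum>v\<in>U - \<tau>. sgn_scale (a v) (bd H (Suc m) c (insert v \<tau>)))"
      using True unfolding bd_def[of H m] U_def a_def by simp
    also have "\<dots> = (\<Sum>v\<in>U - \<tau>. \<Sum>w\<in>U - insert v \<tau>. g v w)"
      by (rule sum.cong) (simp_all add: inner)
    also have "\<dots> = (\<Sum>p\<in>P. case_prod g p)"
      unfolding P_def
      apply (subst sum.Sigma)
        apply (auto simp: finU)
      apply (rule sum.cong)
       apply auto
      done
    also have "P = P1 \<union> P2" unfolding P_def P1_def P2_def by auto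
    also have "(\<Sum>p\<in>P1 \<union> P2. case_prod g p) = (\<Sum>p\<in>P1. case_prod g p) + (\<Sum>p\<in>P2. case_prod g p)"
      by (rule sum.union_disjoint[OF finP]) (auto simp: P1_def P2_def)
    also have "(\<Sum>p\<in>P2. case_prod g p) = (\<Sum>p\<in>P1. case_prod g (prod.swap p))"
      apply (rule sum.reindex_bij_witness[where i=prod.swap and j=prod.swap])
      by (auto simp: P1_def P2_def)
    also have "\<dots> = (\<Sum>p\<in>P1. - case_prod g p)"
    proof (rule sum.cong)
      fix p assume "p \<in> P1"
      then obtain v w where p: "p = (v,w)" "v \<in> U - \<tau>" "w \<in> U - \<tau>" "v < w" unfolding P1_def by auto
      have e1: "{x\<in>insert v \<tau>. x < w} = insert v {x\<in>\<tau>. x < w}" using p by auto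
      have e2: "{x\<in>insert w \<tau>. x < v} = {x\<in>\<tau>. x < v}" using p by auto
      have e3: "insert v (insert w \<tau>) = insert w (insert v \<tau>)" by auto
      have e4: "card (insert v {x\<in>\<tau>. x < w}) = Suc (a w)" using p ft by (simp add: a_def)
      have e5: "card {x\<in>\<tau>. x < v} = a v" by (simp add: a_def)
      have "case_prod g (prod.swap p) = g w v" "case_prod g p = g v w" by (simp_all add: p)
      moreover have "g w v = - g v w"
        unfolding g_def e1 e2 e3 e4 e5 sgn_swap by simp
      ultimately show "case_prod g (prod.swap p) = - case_prod g p" by simp
    qed simp
    finally show ?thesis by (simp add: sum_negf)
  qed
qed

lemma bd_Inf:
  fixes c :: "'v::linorder set \<Rightarrow> 'g::ab_group_add"
  assumes "finite (\<Union>H)" "c \<in> chains H n" "bd H n c \<in> hchains H X (n - 1)"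
  shows "bd H n c \<in> Inf_chains H X (n - 1)"
proof (cases n)
  case 0 then show ?thesis using assms hchains_addclosed[of H X "0-1"]
    by (simp add: Inf_chains_def bd_0 addclosed_def)
next
  case (Suc m)
  have "(\<lambda>x. 0::'g) \<in> hchains H X (m-1)" by (metis addclosed_def hchains_addclosed)
  then show ?thesis using assms Suc
    by (simp add: Inf_chains_def bd_bd)
qed


definition restr :: "'v set set \<Rightarrow> ('v set \<Rightarrow> 'g::ab_group_add) \<Rightarrow> 'v set \<Rightarrow> 'g" where
  "restr X c = (\<lambda>\<sigma>. if \<sigma> \<in> X then c \<sigma> else 0)"

lemma sgn_scale_eq0: "sgn_scale k x = 0 \<longleftrightarrow> x = 0"
  by (simp add: sgn_scale_def)

lemma hchains_mono: "X \<subseteq> Y \<Longrightarrow> hchains H X n \<subseteq> hchains H Y n"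
  by (auto simp: hchains_def)

lemma Inf_mono: "X \<subseteq> Y \<Longrightarrow> Inf_chains H X n \<subseteq> Inf_chains H Y n"
  using hchains_mono[of X Y H] by (auto simp: Inf_chains_def)

lemma bd_nonzero:
  assumes "bd H n c \<tau> \<noteq> 0"
  shows "0 < n \<and> \<tau> \<in> assoc_complex H \<and> card \<tau> = n \<and> (\<exists>v. v \<notin> \<tau> \<and> c (insert v \<tau>) \<noteq> 0)"
proof -
  have c: "0 < n \<and> \<tau> \<in> assoc_complex H \<and> card \<tau> = n" using assms by (auto simp: bd_def split: if_splits)
  then have "(\<Sum>v\<in>\<Union>H - \<tau>. sgn_scale (card {w\<in>\<tau>. w < v}) (c (insert v \<tau>))) \<noteq> 0"
    using assms by (simp add: bd_def)
  then obtain v where "v \<in> \<Union>H - \<tau>" "sgn_scale (card {w\<in>\<tau>. w < v}) (c (insert v \<tau>)) \<noteq> 0"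
    using sum.not_neutral_contains_not_neutral by blast
  then show ?thesis using c by (auto simp: sgn_scale_eq0)
qed

lemma hypergraph_fin: "hypergraph H \<Longrightarrow> finite (\<Union>H)"
  by (auto simp: hypergraph_def)

lemma bd_I:
  assumes "finite (\<Union>H)" "c \<in> Inf_chains H X n"
  shows "bd H n c \<in> Inf_chains H X (n - 1)"
  using assms bd_Inf[of H c n X] by (auto simp: Inf_chains_def hchains_def)

lemma Inf_supp: "c \<in> Inf_chains H X n \<Longrightarrow> c \<sigma> \<noteq> 0 \<Longrightarrow> \<sigma> \<in> X"
  by (auto simp: Inf_chains_def hchains_def)

lemma Inf_chainsD: "c \<in> Inf_chains H X n \<Longrightarrow> c \<in> chains H n"
  by (auto simp: Inf_chains_def hchains_def)

locale sep =
  fixes H :: "'v::linorder set set" and X :: "'v set set"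
  assumes hg: "hypergraph H" and sub: "X \<subseteq> H" and dj: "\<forall>\<tau>\<in>X. \<forall>\<tau>'\<in>H - X. \<tau> \<inter> \<tau>' = {}"
begin

lemma fin: "finite (\<Union>H)" using hg hypergraph_fin by blast

lemma djE:
  assumes "\<sigma> \<in> X" "\<sigma>' \<in> H - X" "\<tau> \<subseteq> \<sigma>" "\<tau> \<subseteq> \<sigma>'" "\<tau> \<noteq> {}"
  shows False
proof -
  have "\<sigma> \<inter> \<sigma>' = {}" using dj assms(1,2) by blast
  then show False using assms(3-5) by blast
qed

lemma sep_bd:
  fixes c :: "'v set \<Rightarrow> 'g::ab_group_add"
  assumes c: "c \<in> Inf_chains H H n"
  shows "restr X c \<in> Inf_chains H X n \<and> bd H n (restr X c) = restr X (bd H n c)"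
proof -
  define cY where "cY = (\<lambda>\<sigma>. if \<sigma> \<in> X then 0 else c \<sigma>)"
  have dec: "c = (\<lambda>\<sigma>. restr X c \<sigma> + cY \<sigma>)" by (auto simp: restr_def cY_def)
  have bdc: "bd H n c \<tau> = bd H n (restr X c) \<tau> + bd H n cY \<tau>" for \<tau>
    by (subst dec) (simp add: bd_add)
  have supA: "0 < n \<and> card \<tau> = n \<and> (\<exists>v. insert v \<tau> \<in> X)" if "bd H n (restr X c) \<tau> \<noteq> 0" for \<tau>
    using bd_nonzero[OF that] by (auto simp: restr_def split: if_splits)
  have supB: "0 < n \<and> card \<tau> = n \<and> (\<exists>w. insert w \<tau> \<in> H - X)" if "bd H n cY \<tau> \<noteq> 0" for \<tau>
    using bd_nonzero[OF that] Inf_supp[OF c] by (auto simp: cY_def split: if_splits)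
  have ne: "\<tau> \<noteq> {}" if "0 < n" "card \<tau> = n" for \<tau> using that by auto
  have notboth: "bd H n (restr X c) \<tau> = 0 \<or> bd H n cY \<tau> = 0" for \<tau>
  proof (rule ccontr)
    assume "\<not> ?thesis"
    then have h1: "bd H n (restr X c) \<tau> \<noteq> 0" "bd H n cY \<tau> \<noteq> 0" by auto
    from supA[OF h1(1)] obtain v where v: "insert v \<tau> \<in> X" "0 < n" "card \<tau> = n" by blast
    from supB[OF h1(2)] obtain w where w: "insert w \<tau> \<in> H - X" by blast
    have "\<tau> \<noteq> {}" using ne v by blast
    then show False using v w using djE[of "insert v \<tau>" "insert w \<tau>" \<tau>] by blast
  qed
  have B_notX: "\<tau> \<notin> X" if nz: "bd H n cY \<tau> \<noteq> 0" for \<tau>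
  proof
    assume "\<tau> \<in> X"
    from supB[OF nz] obtain w where "insert w \<tau> \<in> H - X" "0 < n" "card \<tau> = n" by blast
    moreover have "\<tau> \<noteq> {}" using ne calculation by blast
    ultimately show False using djE[of \<tau> "insert w \<tau>" \<tau>] \<open>\<tau> \<in> X\<close> by blast
  qed
  have A_X: "\<tau> \<in> X" if nz: "bd H n (restr X c) \<tau> \<noteq> 0" for \<tau>
  proof -
    have "bd H n c \<tau> \<noteq> 0" using nz notboth[of \<tau>] bdc[of \<tau>] by auto
    then have "\<tau> \<in> H" using c by (auto simp: Inf_chains_def hchains_def)
    moreover from supA[OF nz] obtain v where "insert v \<tau> \<in> X" "0 < n" "card \<tau> = n" by blast
    moreover have "\<tau> \<noteq> {}" using ne calculation by blast
    ultimately show ?thesis using djE[of "insert v \<tau>" \<tau> \<tau>] by blast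
  qed
  have eq: "bd H n (restr X c) = restr X (bd H n c)"
  proof
    fix \<tau>
    show "bd H n (restr X c) \<tau> = restr X (bd H n c) \<tau>"
    proof (cases "bd H n (restr X c) \<tau> = 0")
      case True
      then show ?thesis using bdc[of \<tau>] B_notX[of \<tau>] by (auto simp: restr_def)
    next
      case False
      then show ?thesis using bdc[of \<tau>] notboth[of \<tau>] A_X[of \<tau>] by (auto simp: restr_def)
    qed
  qed
  have "restr X c \<in> hchains H X n"
    using c by (auto simp: restr_def Inf_chains_def hchains_def chains_def)
  moreover have "bd H n (restr X c) \<in> hchains H X (n - 1)"
    using bd_chains[of H n "restr X c"] A_X by (auto simp: hchains_def)
  ultimately show ?thesis using eq by (simp add: Inf_chains_def)
qed

end


abbreviation "CC H k \<equiv> add_grp (Inf_chains H H k)"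

lemma CC_comm: "comm_group (CC H k)"
  by (rule add_grp_comm_group[OF Inf_addclosed])

lemma r_coset_upd: "r_coset (G\<lparr>carrier := S\<rparr>) = r_coset G"
  by (rule ext, rule ext) (simp add: r_coset_def)

lemma set_mult_upd: "set_mult (G\<lparr>carrier := S\<rparr>) = set_mult G"
  by (rule ext, rule ext) (simp add: set_mult_def)

lemma mem_rcos_add: "x \<in> r_coset (add_grp S) M a \<longleftrightarrow> (\<exists>h\<in>M. x = (\<lambda>y. h y + a y))"
  by (auto simp: r_coset_def)

context sep
begin

lemma IX_sub: "Inf_chains H X k \<subseteq> Inf_chains H H k"
  using Inf_mono[OF sub] .

lemma IX_subgroup: "subgroup (Inf_chains H X k) (CC H k)"
  by (rule add_grp_subgroup[OF Inf_addclosed Inf_addclosed IX_sub])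

lemma IX_normal: "Inf_chains H X k \<lhd> CC H k"
  using comm_group.subgroup_imp_normal[OF CC_comm IX_subgroup] .

lemma Q_comm: "comm_group (quot_chain_grp H X k)"
  unfolding quot_chain_grp_def by (rule comm_group.abelian_FactGroup[OF CC_comm IX_subgroup])

lemma Q_group: "group (quot_chain_grp H X k)"
  using Q_comm comm_group.axioms(2) by blast

lemma Q_carrier: "carrier (quot_chain_grp H X k) = (\<lambda>c. Inf_chains H X k #>\<^bsub>CC H k\<^esub> c) ` Inf_chains H H k"
  unfolding quot_chain_grp_def carrier_FactGroup by simp

lemma Q_one: "one (quot_chain_grp H X k) = Inf_chains H X k"
  unfolding quot_chain_grp_def by simp

lemma Q_mult: "mult (quot_chain_grp H X k) = set_mult (CC H k)"
  unfolding quot_chain_grp_def by simp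

lemma coset_absorb:
  fixes a c :: "'v set \<Rightarrow> 'g::ab_group_add"
  assumes "a \<in> Inf_chains H X k" "c \<in> Inf_chains H H k"
  shows "Inf_chains H X k #>\<^bsub>CC H k\<^esub> (\<lambda>x. a x + c x) = Inf_chains H X k #>\<^bsub>CC H k\<^esub> c"
proof -
  interpret C: comm_group "CC H k :: ('v set \<Rightarrow> 'g) monoid" by (rule CC_comm)
  have a: "a \<in> carrier (CC H k)" using assms(1) IX_sub by auto
  have M: "Inf_chains H X k \<subseteq> carrier (CC H k :: ('v set \<Rightarrow> 'g) monoid)" using IX_sub by simp
  have cc: "c \<in> carrier (CC H k)" using assms(2) by simp
  have "Inf_chains H X k #>\<^bsub>CC H k\<^esub> (a \<otimes>\<^bsub>CC H k\<^esub> c) = (Inf_chains H X k #>\<^bsub>CC H k\<^esub> a) #>\<^bsub>CC H k\<^esub> c"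
    using C.coset_mult_assoc[OF M a cc] by simp
  also have "Inf_chains H X k #>\<^bsub>CC H k\<^esub> a = Inf_chains H X k"
    using C.coset_join2[OF a IX_subgroup assms(1)] .
  finally show ?thesis by simp
qed

lemma bdI: "c \<in> Inf_chains H Y n \<Longrightarrow> bd H n c \<in> Inf_chains H Y (n - 1)"
  using bd_I[OF fin] .

lemma qbd:
  fixes c :: "'v set \<Rightarrow> 'g::ab_group_add"
  assumes c: "c \<in> Inf_chains H H n"
  shows "quot_bd H X n (Inf_chains H X n #>\<^bsub>CC H n\<^esub> c) = Inf_chains H X (n - 1) #>\<^bsub>CC H (n - 1)\<^esub> bd H n c"
proof -
  interpret C: comm_group "CC H n :: ('v set \<Rightarrow> 'g) monoid" by (rule CC_comm)
  let ?q = "Inf_chains H X n #>\<^bsub>CC H n\<^esub> c"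
  have "c \<in> ?q" using C.rcos_self[of c "Inf_chains H X n"] c IX_subgroup[of n] by simp
  then have "(SOME c. c \<in> ?q) \<in> ?q" by (rule someI[where P="\<lambda>x. x \<in> ?q"])
  then obtain a where a: "a \<in> Inf_chains H X n" and eq: "(SOME c. c \<in> ?q) = (\<lambda>y. a y + c y)"
    unfolding mem_rcos_add by blast
  have "bd H n (SOME c. c \<in> ?q) = (\<lambda>y. bd H n a y + bd H n c y)"
    unfolding eq bd_add ..
  then show ?thesis
    unfolding quot_bd_def using coset_absorb[OF bdI[OF a] bdI[OF c]] by simp
qed

end


definition ZQ :: "'v::linorder set set \<Rightarrow> 'v set set \<Rightarrow> nat \<Rightarrow> ('v set \<Rightarrow> 'g::ab_group_add) set set" where
  "ZQ H X n = {q \<in> carrier (quot_chain_grp H X n). n = 0 \<or> quot_bd H X n q = Inf_chains H X (n - 1)}"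

definition BQ :: "'v::linorder set set \<Rightarrow> 'v set set \<Rightarrow> nat \<Rightarrow> ('v set \<Rightarrow> 'g::ab_group_add) set set" where
  "BQ H X n = quot_bd H X (Suc n) ` carrier (quot_chain_grp H X (Suc n))"

definition QZ :: "'v::linorder set set \<Rightarrow> 'v set set \<Rightarrow> nat \<Rightarrow> ('v set \<Rightarrow> 'g::ab_group_add) set monoid" where
  "QZ H X n = (quot_chain_grp H X n)\<lparr>carrier := ZQ H X n\<rparr>"

definition piQ :: "'v::linorder set set \<Rightarrow> 'v set set \<Rightarrow> nat \<Rightarrow> ('v set \<Rightarrow> 'g::ab_group_add) \<Rightarrow> ('v set \<Rightarrow> 'g) set set" where
  "piQ H X n c = BQ H X n #>\<^bsub>QZ H X n\<^esub> (Inf_chains H X n #>\<^bsub>CC H n\<^esub> c)"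

definition Zc :: "'v::linorder set set \<Rightarrow> nat \<Rightarrow> ('v set \<Rightarrow> 'g::ab_group_add) set" where
  "Zc H n = {c \<in> Inf_chains H H n. n = 0 \<or> bd H n c = (\<lambda>x. 0)}"

lemma rel_eq: "rel_embedded_homology H X n = QZ H X n Mod BQ H X n"
  unfolding rel_embedded_homology_def homology_def QZ_def ZQ_def BQ_def
  by (simp add: quot_chain_grp_def)

lemma Zc_addclosed: "addclosed (Zc H n)"
  using Inf_addclosed[of H H n] unfolding addclosed_def Zc_def
  by (auto simp: bd_add bd_neg bd_zero)

lemma Zc_sub: "Zc H n \<subseteq> Inf_chains H H n"
  by (auto simp: Zc_def)

context sep
begin

lemma qbd_carrier:
  assumes "q \<in> carrier (quot_chain_grp H X n :: ('v set \<Rightarrow> 'g::ab_group_add) set monoid)"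
  obtains c where "c \<in> Inf_chains H H n" "q = Inf_chains H X n #>\<^bsub>CC H n\<^esub> c"
  using assms unfolding Q_carrier by blast

lemma coset_in_Q:
  "c \<in> Inf_chains H H n \<Longrightarrow> Inf_chains H X n #>\<^bsub>CC H n\<^esub> c \<in> carrier (quot_chain_grp H X n)"
  unfolding Q_carrier by blast

lemma coset_sum:
  fixes c1 c2 :: "'v set \<Rightarrow> 'g::ab_group_add"
  assumes "c1 \<in> Inf_chains H H n" "c2 \<in> Inf_chains H H n"
  shows "(Inf_chains H X n #>\<^bsub>CC H n\<^esub> c1) \<otimes>\<^bsub>quot_chain_grp H X n\<^esub> (Inf_chains H X n #>\<^bsub>CC H n\<^esub> c2)
     = Inf_chains H X n #>\<^bsub>CC H n\<^esub> (\<lambda>x. c1 x + c2 x)"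
proof -
  interpret N: normal "Inf_chains H X n" "CC H n :: ('v set \<Rightarrow> 'g) monoid" by (rule IX_normal)
  show ?thesis using N.rcos_sum[of c1 c2] assms by (simp add: Q_mult)
qed

lemma qbd_hom: "group_hom (quot_chain_grp H X n :: ('v set \<Rightarrow> 'g::ab_group_add) set monoid) (quot_chain_grp H X (n - 1)) (quot_bd H X n)"
proof (intro group_hom.intro group_hom_axioms.intro Q_group)
  show "quot_bd H X n \<in> hom (quot_chain_grp H X n :: ('v set \<Rightarrow> 'g::ab_group_add) set monoid) (quot_chain_grp H X (n - 1))"
  proof (rule homI)
    fix q assume "q \<in> carrier (quot_chain_grp H X n :: ('v set \<Rightarrow> 'g::ab_group_add) set monoid)"
    then obtain c where c: "c \<in> Inf_chains H H n" "q = Inf_chains H X n #>\<^bsub>CC H n\<^esub> c" by (rule qbd_carrier)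
    show "quot_bd H X n q \<in> carrier (quot_chain_grp H X (n - 1))"
      using qbd[OF c(1)] coset_in_Q[OF bdI[OF c(1)]] c(2) by simp
  next
    fix q1 q2 assume "q1 \<in> carrier (quot_chain_grp H X n :: ('v set \<Rightarrow> 'g::ab_group_add) set monoid)"
      "q2 \<in> carrier (quot_chain_grp H X n :: ('v set \<Rightarrow> 'g::ab_group_add) set monoid)"
    then obtain c1 c2 where c: "c1 \<in> Inf_chains H H n" "q1 = Inf_chains H X n #>\<^bsub>CC H n\<^esub> c1"
      "c2 \<in> Inf_chains H H n" "q2 = Inf_chains H X n #>\<^bsub>CC H n\<^esub> c2" by (metis qbd_carrier)
    have s: "(\<lambda>x. c1 x + c2 x) \<in> Inf_chains H H n"
      using c Inf_addclosed[of H H n] by (auto simp: addclosed_def)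
    show "quot_bd H X n (q1 \<otimes>\<^bsub>quot_chain_grp H X n\<^esub> q2) =
          quot_bd H X n q1 \<otimes>\<^bsub>quot_chain_grp H X (n - 1)\<^esub> quot_bd H X n q2"
      using c s coset_sum[OF bdI[OF c(1)] bdI[OF c(3)]] by (simp add: coset_sum qbd bd_add)
  qed
qed

lemma ZQ_sub: "subgroup (ZQ H X n) (quot_chain_grp H X n :: ('v set \<Rightarrow> 'g::ab_group_add) set monoid)"
proof (cases n)
  case 0
  then show ?thesis using group.subgroup_self[OF Q_group] by (simp add: ZQ_def)
next
  case (Suc m)
  interpret h: group_hom "quot_chain_grp H X n :: ('v set \<Rightarrow> 'g::ab_group_add) set monoid" "quot_chain_grp H X (n - 1)" "quot_bd H X n"
    by (rule qbd_hom)
  have "ZQ H X n = kernel (quot_chain_grp H X n :: ('v set \<Rightarrow> 'g::ab_group_add) set monoid) (quot_chain_grp H X (n - 1)) (quot_bd H X n)"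
    using Suc by (auto simp: ZQ_def kernel_def Q_one)
  then show ?thesis using h.subgroup_kernel by simp
qed

lemma BQ_sub: "subgroup (BQ H X n) (quot_chain_grp H X n :: ('v set \<Rightarrow> 'g::ab_group_add) set monoid)"
proof -
  interpret h: group_hom "quot_chain_grp H X (Suc n) :: ('v set \<Rightarrow> 'g::ab_group_add) set monoid" "quot_chain_grp H X (Suc n - 1)" "quot_bd H X (Suc n)"
    by (rule qbd_hom)
  show ?thesis using h.img_is_subgroup by (simp add: BQ_def)
qed

lemma bd_bd_I: "d \<in> Inf_chains H H (Suc n) \<Longrightarrow> bd H n (bd H (Suc n) d) = (\<lambda>_. 0)"
  using bd_bd[OF fin] Inf_chainsD by blast

lemma BQ_ZQ: "BQ H X n \<subseteq> (ZQ H X n :: ('v set \<Rightarrow> 'g::ab_group_add) set set)"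
proof
  fix q assume "q \<in> (BQ H X n :: ('v set \<Rightarrow> 'g::ab_group_add) set set)"
  then obtain q' where q': "q' \<in> carrier (quot_chain_grp H X (Suc n) :: ('v set \<Rightarrow> 'g::ab_group_add) set monoid)"
    "q = quot_bd H X (Suc n) q'" unfolding BQ_def by blast
  then obtain d where d: "d \<in> Inf_chains H H (Suc n)" "q' = Inf_chains H X (Suc n) #>\<^bsub>CC H (Suc n)\<^esub> d"
    by (metis qbd_carrier)
  have q: "q = Inf_chains H X n #>\<^bsub>CC H n\<^esub> bd H (Suc n) d" using q' d qbd[OF d(1)] by simp
  have bdd: "bd H (Suc n) d \<in> Inf_chains H H n" using bdI[OF d(1)] by simp
  have "quot_bd H X n q = Inf_chains H X (n - 1)" if "n > 0"
  proof -
    interpret C: comm_group "CC H (n - 1) :: ('v set \<Rightarrow> 'g) monoid" by (rule CC_comm)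
    have "quot_bd H X n q = Inf_chains H X (n - 1) #>\<^bsub>CC H (n - 1)\<^esub> (\<lambda>_. 0)"
      using q qbd[OF bdd] bd_bd_I[OF d(1)] by simp
    also have "\<dots> = Inf_chains H X (n - 1)"
      using C.coset_mult_one[of "Inf_chains H X (n - 1)"] IX_sub[of "n - 1"] by simp
    finally show ?thesis .
  qed
  then show "q \<in> ZQ H X n" using q coset_in_Q[OF bdd] by (auto simp: ZQ_def)
qed

lemma QZ_comm: "comm_group (QZ H X n :: ('v set \<Rightarrow> 'g::ab_group_add) set monoid)"
  unfolding QZ_def by (rule comm_group_restrict[OF Q_comm ZQ_sub])

lemma BQ_sub_QZ: "subgroup (BQ H X n) (QZ H X n :: ('v set \<Rightarrow> 'g::ab_group_add) set monoid)"
  unfolding QZ_def by (rule group.subgroup_incl[OF Q_group BQ_sub ZQ_sub BQ_ZQ])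

lemma BQ_normal: "BQ H X n \<lhd> (QZ H X n :: ('v set \<Rightarrow> 'g::ab_group_add) set monoid)"
  by (rule comm_group.subgroup_imp_normal[OF QZ_comm BQ_sub_QZ])

lemma rel_group: "group (rel_embedded_homology H X n :: ('v set \<Rightarrow> 'g::ab_group_add) set set monoid)"
  unfolding rel_eq by (rule normal.factorgroup_is_group[OF BQ_normal])

end


context sep
begin

lemma cyc_ZQ:
  fixes c :: "'v set \<Rightarrow> 'g::ab_group_add"
  assumes c: "c \<in> Zc H n"
  shows "Inf_chains H X n #>\<^bsub>CC H n\<^esub> c \<in> ZQ H X n"
proof -
  have cI: "c \<in> Inf_chains H H n" using c by (simp add: Zc_def)
  have "quot_bd H X n (Inf_chains H X n #>\<^bsub>CC H n\<^esub> c) = Inf_chains H X (n - 1)" if "n > 0"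
  proof -
    interpret C: comm_group "CC H (n - 1) :: ('v set \<Rightarrow> 'g) monoid" by (rule CC_comm)
    have "bd H n c = (\<lambda>x. 0)" using c that by (simp add: Zc_def)
    then have "quot_bd H X n (Inf_chains H X n #>\<^bsub>CC H n\<^esub> c) = Inf_chains H X (n - 1) #>\<^bsub>CC H (n - 1)\<^esub> (\<lambda>_. 0)"
      using qbd[OF cI] by simp
    also have "\<dots> = Inf_chains H X (n - 1)"
      using C.coset_mult_one[of "Inf_chains H X (n - 1)"] IX_sub[of "n - 1"] by simp
    finally show ?thesis .
  qed
  then show ?thesis using coset_in_Q[OF cI] by (auto simp: ZQ_def)
qed

lemma rel_carrier: "carrier (rel_embedded_homology H X n) = (\<lambda>q. BQ H X n #>\<^bsub>QZ H X n\<^esub> q) ` ZQ H X n"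
  unfolding rel_eq carrier_FactGroup by (simp add: QZ_def)

lemma rel_mult: "mult (rel_embedded_homology H X n) = set_mult (QZ H X n)"
  unfolding rel_eq by simp

lemma rel_one: "one (rel_embedded_homology H X n) = BQ H X n"
  unfolding rel_eq by simp

lemma piQ_carrier:
  "c \<in> Zc H n \<Longrightarrow> piQ H X n c \<in> carrier (rel_embedded_homology H X n)"
  unfolding rel_carrier piQ_def using cyc_ZQ by blast

lemma pi_hom: "piQ H X n \<in> hom (add_grp (Zc H n)) (rel_embedded_homology H X n :: ('v set \<Rightarrow> 'g::ab_group_add) set set monoid)"
proof (rule homI)
  fix c assume "c \<in> carrier (add_grp (Zc H n) :: ('v set \<Rightarrow> 'g) monoid)"
  then show "piQ H X n c \<in> carrier (rel_embedded_homology H X n)" using piQ_carrier by simp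
next
  fix c1 c2 assume a: "c1 \<in> carrier (add_grp (Zc H n) :: ('v set \<Rightarrow> 'g) monoid)" "c2 \<in> carrier (add_grp (Zc H n) :: ('v set \<Rightarrow> 'g) monoid)"
  interpret N: normal "BQ H X n" "QZ H X n :: ('v set \<Rightarrow> 'g) set monoid" by (rule BQ_normal)
  have c: "c1 \<in> Zc H n" "c2 \<in> Zc H n" using a by auto
  have cI: "c1 \<in> Inf_chains H H n" "c2 \<in> Inf_chains H H n" using c Zc_sub by auto
  have q: "Inf_chains H X n #>\<^bsub>CC H n\<^esub> c1 \<in> carrier (QZ H X n :: ('v set \<Rightarrow> 'g) set monoid)"
     "Inf_chains H X n #>\<^bsub>CC H n\<^esub> c2 \<in> carrier (QZ H X n :: ('v set \<Rightarrow> 'g) set monoid)"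
    using cyc_ZQ[OF c(1)] cyc_ZQ[OF c(2)] by (auto simp: QZ_def)
  have m: "(Inf_chains H X n #>\<^bsub>CC H n\<^esub> c1) \<otimes>\<^bsub>QZ H X n\<^esub> (Inf_chains H X n #>\<^bsub>CC H n\<^esub> c2)
     = Inf_chains H X n #>\<^bsub>CC H n\<^esub> (\<lambda>x. c1 x + c2 x)"
    using coset_sum[OF cI] by (simp add: QZ_def)
  show "piQ H X n (c1 \<otimes>\<^bsub>add_grp (Zc H n)\<^esub> c2) = piQ H X n c1 \<otimes>\<^bsub>rel_embedded_homology H X n\<^esub> piQ H X n c2"
    unfolding piQ_def rel_mult using N.rcos_sum[OF q] m by simp
qed

lemma pi_char:
  fixes Y :: "('v set \<Rightarrow> 'g::ab_group_add) set set"
  assumes "Y \<in> carrier (rel_embedded_homology H X n)"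
  shows "\<exists>a\<in>Inf_chains H H n. (n = 0 \<or> bd H n a \<in> Inf_chains H X (n - 1)) \<and> Y = piQ H X n a"
proof -
  obtain q where q: "q \<in> ZQ H X n" "Y = BQ H X n #>\<^bsub>QZ H X n\<^esub> q" using assms unfolding rel_carrier by blast
  then obtain a where a: "a \<in> Inf_chains H H n" "q = Inf_chains H X n #>\<^bsub>CC H n\<^esub> a"
    unfolding ZQ_def by (auto elim: qbd_carrier)
  have "bd H n a \<in> Inf_chains H X (n - 1)" if "n > 0"
  proof -
    interpret C: comm_group "CC H (n - 1) :: ('v set \<Rightarrow> 'g) monoid" by (rule CC_comm)
    have "Inf_chains H X (n - 1) #>\<^bsub>CC H (n - 1)\<^esub> bd H n a = Inf_chains H X (n - 1)"
      using q a that qbd[OF a(1)] by (auto simp: ZQ_def)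
    from C.coset_join1[OF this _ IX_subgroup] bdI[OF a(1)] show ?thesis by simp
  qed
  then show ?thesis using a q by (auto simp: piQ_def)
qed

lemma pi_cong:
  fixes a e :: "'v set \<Rightarrow> 'g::ab_group_add"
  assumes "a \<in> Inf_chains H H n" "e \<in> Inf_chains H X n"
  shows "piQ H X n (\<lambda>x. e x + a x) = piQ H X n a"
  unfolding piQ_def using coset_absorb[OF assms(2,1)] by simp

lemma pi_ker:
  fixes c :: "'v set \<Rightarrow> 'g::ab_group_add"
  assumes c: "c \<in> Zc H n"
  shows "piQ H X n c = BQ H X n \<longleftrightarrow> (\<exists>d\<in>Inf_chains H H (Suc n). \<exists>e\<in>Inf_chains H X n. c = (\<lambda>x. e x + bd H (Suc n) d x))"
proof -
  interpret Q: comm_group "QZ H X n :: ('v set \<Rightarrow> 'g) set monoid" by (rule QZ_comm)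
  interpret C: comm_group "CC H n :: ('v set \<Rightarrow> 'g) monoid" by (rule CC_comm)
  have cI: "c \<in> Inf_chains H H n" using c by (simp add: Zc_def)
  let ?q = "Inf_chains H X n #>\<^bsub>CC H n\<^esub> c"
  have qc: "?q \<in> carrier (QZ H X n)" using cyc_ZQ[OF c] by (simp add: QZ_def)
  have eqv: "(?q = Inf_chains H X n #>\<^bsub>CC H n\<^esub> bd H (Suc n) d) \<longleftrightarrow> (\<exists>e\<in>Inf_chains H X n. c = (\<lambda>x. e x + bd H (Suc n) d x))"
    if d: "d \<in> Inf_chains H H (Suc n)" for d :: "'v set \<Rightarrow> 'g"
  proof
    have bdd: "bd H (Suc n) d \<in> Inf_chains H H n" using bdI[OF d] by simp
    {
      assume "?q = Inf_chains H X n #>\<^bsub>CC H n\<^esub> bd H (Suc n) d"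
      moreover have "c \<in> ?q" using C.rcos_self[of c "Inf_chains H X n"] cI IX_subgroup[of n] by simp
      ultimately have "c \<in> Inf_chains H X n #>\<^bsub>CC H n\<^esub> bd H (Suc n) d" by simp
      then show "\<exists>e\<in>Inf_chains H X n. c = (\<lambda>x. e x + bd H (Suc n) d x)"
        unfolding mem_rcos_add by simp
    }
    {
      assume "\<exists>e\<in>Inf_chains H X n. c = (\<lambda>x. e x + bd H (Suc n) d x)"
      then obtain e where "e \<in> Inf_chains H X n" "c = (\<lambda>x. e x + bd H (Suc n) d x)" by blast
      then show "?q = Inf_chains H X n #>\<^bsub>CC H n\<^esub> bd H (Suc n) d"
        using coset_absorb[OF _ bdd] by simp
    }
  qed
  have "piQ H X n c = BQ H X n \<longleftrightarrow> ?q \<in> BQ H X n"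
    unfolding piQ_def using Q.coset_join1[OF _ qc BQ_sub_QZ] Q.coset_join2[OF qc BQ_sub_QZ] by blast
  also have "\<dots> \<longleftrightarrow> (\<exists>d\<in>Inf_chains H H (Suc n). ?q = Inf_chains H X n #>\<^bsub>CC H n\<^esub> bd H (Suc n) d)"
  proof
    assume "?q \<in> BQ H X n"
    then obtain q' where q': "q' \<in> carrier (quot_chain_grp H X (Suc n) :: ('v set \<Rightarrow> 'g) set monoid)" "?q = quot_bd H X (Suc n) q'"
      unfolding BQ_def by blast
    then obtain d where d: "d \<in> Inf_chains H H (Suc n)" "q' = Inf_chains H X (Suc n) #>\<^bsub>CC H (Suc n)\<^esub> d"
      by (metis qbd_carrier)
    then show "\<exists>d\<in>Inf_chains H H (Suc n). ?q = Inf_chains H X n #>\<^bsub>CC H n\<^esub> bd H (Suc n) d"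
      using q' qbd[OF d(1)] by auto
  next
    assume "\<exists>d\<in>Inf_chains H H (Suc n). ?q = Inf_chains H X n #>\<^bsub>CC H n\<^esub> bd H (Suc n) d"
    then obtain d where d: "d \<in> Inf_chains H H (Suc n)" "?q = Inf_chains H X n #>\<^bsub>CC H n\<^esub> bd H (Suc n) d" by blast
    then have "?q = quot_bd H X (Suc n) (Inf_chains H X (Suc n) #>\<^bsub>CC H (Suc n)\<^esub> d)"
      using qbd[OF d(1)] by simp
    then show "?q \<in> BQ H X n" unfolding BQ_def using coset_in_Q[OF d(1)] by blast
  qed
  also have "\<dots> \<longleftrightarrow> (\<exists>d\<in>Inf_chains H H (Suc n). \<exists>e\<in>Inf_chains H X n. c = (\<lambda>x. e x + bd H (Suc n) d x))"
    by (rule bex_cong[OF refl eqv])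
  finally show ?thesis .
qed

end


lemma restr_decomp:
  assumes "c \<in> Inf_chains H H n" "A \<subseteq> H"
  shows "c = (\<lambda>x. restr A c x + restr (H - A) c x)"
proof
  fix x show "c x = restr A c x + restr (H - A) c x"
    using Inf_supp[OF assms(1), of x] assms(2) by (cases "x \<in> A") (auto simp: restr_def)
qed

lemma restr_zero:
  assumes "e \<in> Inf_chains H X n" "X \<inter> Y = {}"
  shows "restr Y e = (\<lambda>_. 0)"
proof
  fix x show "restr Y e x = 0" using Inf_supp[OF assms(1), of x] assms(2) by (auto simp: restr_def)
qed

lemma supp_zero:
  assumes "e \<in> Inf_chains H X n" "x \<notin> X"
  shows "e x = 0"
  using Inf_supp[OF assms(1), of x] assms(2) by auto

theorem mainTheorem12:
  fixes H A :: "'v::linorder set set" and n :: nat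
  assumes "hypergraph H"
    and "A \<subseteq> H"
    and "\<forall>\<sigma>\<in>H. \<forall>\<sigma>'\<in>H. \<sigma> \<inter> \<sigma>' = {} \<or> \<sigma> \<inter> \<sigma>' \<in> H"
    and "\<forall>\<tau>\<in>A. \<forall>\<tau>'\<in>H - A. \<tau> \<inter> \<tau>' = {}"
  shows "((rel_embedded_homology H A n :: ('v set \<Rightarrow> 'g::ab_group_add) set set monoid)
             \<times>\<times> (rel_embedded_homology H (H - A) n :: ('v set \<Rightarrow> 'g) set set monoid))
           \<cong> (embedded_homology H n :: ('v set \<Rightarrow> 'g) set monoid)"
proof -
  interpret a: sep H A using assms(1,2,4) by (unfold_locales) auto
  interpret b: sep H "H - A"
  proof
    show "hypergraph H" "H - A \<subseteq> H" using assms(1) by auto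
    show "\<forall>\<tau>\<in>H - A. \<forall>\<tau>'\<in>H - (H - A). \<tau> \<inter> \<tau>' = {}"
      using assms(2,4) by blast
  qed
  let ?Z = "Zc H n :: ('v set \<Rightarrow> 'g) set"
  let ?RA = "rel_embedded_homology H A n :: ('v set \<Rightarrow> 'g) set set monoid"
  let ?RB = "rel_embedded_homology H (H - A) n :: ('v set \<Rightarrow> 'g) set set monoid"
  let ?B = "bd H (Suc n) ` Inf_chains H H (Suc n) :: ('v set \<Rightarrow> 'g) set"
  define h where "h = (\<lambda>c :: 'v set \<Rightarrow> 'g. (piQ H A n c, piQ H (H - A) n c))"
  have hom: "h \<in> hom (add_grp ?Z) (?RA \<times>\<times> ?RB)"
    unfolding h_def hom_paired using a.pi_hom b.pi_hom by blast
  have gZ: "comm_group (add_grp ?Z)" by (rule add_grp_comm_group[OF Zc_addclosed])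
  have gh: "group_hom (add_grp ?Z) (?RA \<times>\<times> ?RB) h"
    by (intro group_hom.intro group_hom_axioms.intro hom DirProd_group a.rel_group b.rel_group)
       (use gZ comm_group.axioms(2) in blast)
  have IAI: "Inf_chains H A k \<subseteq> Inf_chains H H k" for k using a.IX_sub by blast
  have IBI: "Inf_chains H (H - A) k \<subseteq> Inf_chains H H k" for k using b.IX_sub by blast
  have cl: "\<And>f g. f \<in> Inf_chains H Y k \<Longrightarrow> g \<in> Inf_chains H Y k \<Longrightarrow> (\<lambda>x. f x + g x) \<in> Inf_chains H Y k"
    "\<And>f. f \<in> Inf_chains H Y k \<Longrightarrow> (\<lambda>x. - f x) \<in> Inf_chains H Y k"
    for Y k using Inf_addclosed[of H Y k] unfolding addclosed_def by auto
  have surj: "h ` carrier (add_grp ?Z) = carrier (?RA \<times>\<times> ?RB)"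
  proof
    show "h ` carrier (add_grp ?Z) \<subseteq> carrier (?RA \<times>\<times> ?RB)"
      unfolding h_def using a.piQ_carrier b.piQ_carrier by auto
  next
    show "carrier (?RA \<times>\<times> ?RB) \<subseteq> h ` carrier (add_grp ?Z)"
    proof
      fix Y assume "Y \<in> carrier (?RA \<times>\<times> ?RB)"
      then obtain Y1 Y2 where Y: "Y = (Y1, Y2)" "Y1 \<in> carrier ?RA" "Y2 \<in> carrier ?RB" by auto
      obtain a1 where a1: "a1 \<in> Inf_chains H H n" "n = 0 \<or> bd H n a1 \<in> Inf_chains H A (n - 1)" "Y1 = piQ H A n a1"
        using a.pi_char[OF Y(2)] by blast
      obtain a2 where a2: "a2 \<in> Inf_chains H H n" "n = 0 \<or> bd H n a2 \<in> Inf_chains H (H - A) (n - 1)" "Y2 = piQ H (H - A) n a2"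
        using b.pi_char[OF Y(3)] by blast
      define c where "c = (\<lambda>x. restr (H - A) a1 x + restr A a2 x)"
      have rB1: "restr (H - A) a1 \<in> Inf_chains H (H - A) n" and eB1: "bd H n (restr (H - A) a1) = restr (H - A) (bd H n a1)"
        using b.sep_bd[OF a1(1)] by auto
      have rA2: "restr A a2 \<in> Inf_chains H A n" and eA2: "bd H n (restr A a2) = restr A (bd H n a2)"
        using a.sep_bd[OF a2(1)] by auto
      have rA1: "restr A a1 \<in> Inf_chains H A n" using a.sep_bd[OF a1(1)] by auto
      have rB2: "restr (H - A) a2 \<in> Inf_chains H (H - A) n" using b.sep_bd[OF a2(1)] by auto
      have cI: "c \<in> Inf_chains H H n" unfolding c_def using rB1 rA2 IAI IBI cl by blast
      have "bd H n c = (\<lambda>x. 0)" if "n > 0"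
      proof -
        have z1: "restr (H - A) (bd H n a1) = (\<lambda>_. 0)"
          using a1(2) that by (intro restr_zero[of _ H A "n - 1"]) auto
        have z2: "restr A (bd H n a2) = (\<lambda>_. 0)"
          using a2(2) that by (intro restr_zero[of _ H "H - A" "n - 1"]) auto
        show ?thesis unfolding c_def bd_add eB1 eA2 z1 z2 by simp
      qed
      then have cZ: "c \<in> ?Z" using cI by (auto simp: Zc_def)
      define e1 where "e1 = (\<lambda>x. restr A a2 x + - restr A a1 x)"
      have e1: "e1 \<in> Inf_chains H A n" unfolding e1_def using rA1 rA2 cl by blast
      have c1: "c = (\<lambda>x. e1 x + a1 x)"
      proof
        fix x show "c x = e1 x + a1 x"
          using fun_cong[OF restr_decomp[OF a1(1) assms(2)], of x]
          by (simp add: c_def e1_def algebra_simps)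
      qed
      define e2 where "e2 = (\<lambda>x. restr (H - A) a1 x + - restr (H - A) a2 x)"
      have e2: "e2 \<in> Inf_chains H (H - A) n" unfolding e2_def using rB1 rB2 cl by blast
      have c2: "c = (\<lambda>x. e2 x + a2 x)"
      proof
        fix x show "c x = e2 x + a2 x"
          using fun_cong[OF restr_decomp[OF a2(1) assms(2)], of x]
          by (simp add: c_def e2_def algebra_simps)
      qed
      have "h c = Y" unfolding h_def Y a1(3) a2(3)
        using a.pi_cong[OF a1(1) e1] b.pi_cong[OF a2(1) e2] c1 c2 by simp
      then show "Y \<in> h ` carrier (add_grp ?Z)" using cZ by force
    qed
  qed
  have ker: "kernel (add_grp ?Z) (?RA \<times>\<times> ?RB) h = ?B"
  proof
    show "kernel (add_grp ?Z) (?RA \<times>\<times> ?RB) h \<subseteq> ?B"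
    proof
      fix c assume "c \<in> kernel (add_grp ?Z) (?RA \<times>\<times> ?RB) h"
      then have cZ: "c \<in> ?Z" and k1: "piQ H A n c = BQ H A n" and k2: "piQ H (H - A) n c = BQ H (H - A) n"
        by (auto simp: kernel_def h_def a.rel_one b.rel_one)
      have cI: "c \<in> Inf_chains H H n" using cZ by (simp add: Zc_def)
      obtain d1 e1 where d1: "d1 \<in> Inf_chains H H (Suc n)" "e1 \<in> Inf_chains H A n" "c = (\<lambda>x. e1 x + bd H (Suc n) d1 x)"
        using a.pi_ker[OF cZ] k1 by blast
      obtain d2 e2 where d2: "d2 \<in> Inf_chains H H (Suc n)" "e2 \<in> Inf_chains H (H - A) n" "c = (\<lambda>x. e2 x + bd H (Suc n) d2 x)"
        using b.pi_ker[OF cZ] k2 by blast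
      define d where "d = (\<lambda>x. restr A d2 x + restr (H - A) d1 x)"
      have r1: "restr A d2 \<in> Inf_chains H A (Suc n)" "bd H (Suc n) (restr A d2) = restr A (bd H (Suc n) d2)"
        using a.sep_bd[OF d2(1)] by auto
      have r2: "restr (H - A) d1 \<in> Inf_chains H (H - A) (Suc n)" "bd H (Suc n) (restr (H - A) d1) = restr (H - A) (bd H (Suc n) d1)"
        using b.sep_bd[OF d1(1)] by auto
      have dI: "d \<in> Inf_chains H H (Suc n)" unfolding d_def using r1(1) r2(1) IAI IBI cl by blast
      have "bd H (Suc n) d = c"
      proof
        fix x
        have "bd H (Suc n) d x = restr A (bd H (Suc n) d2) x + restr (H - A) (bd H (Suc n) d1) x"
          unfolding d_def bd_add r1(2) r2(2) ..
        also have "\<dots> = c x"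
        proof (cases "x \<in> A")
          case True
          then have "e2 x = 0" using supp_zero[OF d2(2)] by simp
          then show ?thesis using True fun_cong[OF d2(3), of x] by (simp add: restr_def)
        next
          case False
          show ?thesis
          proof (cases "x \<in> H")
            case True
            then have "e1 x = 0" using supp_zero[OF d1(2)] False by simp
            then show ?thesis using True False fun_cong[OF d1(3), of x] by (simp add: restr_def)
          next
            case F2: False
            then show ?thesis using False supp_zero[OF cI F2] by (simp add: restr_def)
          qed
        qed
        finally show "bd H (Suc n) d x = c x" .
      qed
      then show "c \<in> ?B" using dI by blast
    qed
  next
    show "?B \<subseteq> kernel (add_grp ?Z) (?RA \<times>\<times> ?RB) h"
    proof
      fix c assume "c \<in> ?B"
      then obtain d where d: "d \<in> Inf_chains H H (Suc n)" "c = bd H (Suc n) d" by blast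
      have "c \<in> Inf_chains H H n" using a.bdI[OF d(1)] d(2) by simp
      then have cZ: "c \<in> ?Z" using a.bd_bd_I[OF d(1)] d(2) by (auto simp: Zc_def)
      have z: "(\<lambda>x. 0::'g) \<in> Inf_chains H Y n" for Y by (metis Inf_addclosed addclosed_def)
      have ex: "\<exists>d'\<in>Inf_chains H H (Suc n). \<exists>e\<in>Inf_chains H Y n. c = (\<lambda>x. e x + bd H (Suc n) d' x)" for Y
        using d z[of Y] by force
      have "piQ H A n c = BQ H A n" using a.pi_ker[OF cZ] ex by blast
      moreover have "piQ H (H - A) n c = BQ H (H - A) n" using b.pi_ker[OF cZ] ex by blast
      ultimately show "c \<in> kernel (add_grp ?Z) (?RA \<times>\<times> ?RB) h"
        using cZ by (simp add: kernel_def h_def a.rel_one b.rel_one)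
    qed
  qed
  have iso: "(add_grp ?Z Mod ?B) \<cong> (?RA \<times>\<times> ?RB)"
    using group_hom.FactGroup_iso[OF gh surj] ker by simp
  have emb: "(embedded_homology H n :: ('v set \<Rightarrow> 'g) set monoid) = add_grp ?Z Mod ?B"
    unfolding embedded_homology_def homology_def Zc_def by simp
  have grp: "group (add_grp ?Z Mod ?B)"
    using normal.factorgroup_is_group[OF group_hom.normal_kernel[OF gh]] ker by simp
  show ?thesis unfolding emb using group.iso_sym[OF grp iso] .
qed

end
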